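(* Let $G$ be a connected, locally finite multigraph without self-loops, either finite with a boundary vertex $\partial$ or infinite (with no boundary), with i.i.d. Exponential$(1)$ weights on its oriented edges. Then the loop contracting random walk started at $x$ has the same law as the CLEB walk started at $x$: the sequence of oriented edges (viewed as edges of $G$) selected at successive steps by the CLEB walk has the same law as the sequence selected by the LCRW. In fact the two processes can be coupled so that at every step the LCRW selects the same oriented edge as the CLEB walk.
   Context: Contraction of an oriented cycle $C$: remove the vertices of $C$ and all oriented edges with both endpoints in $C$, add a new vertex $v_C$, and replace each oriented edge with exactly one endpoint in $C$ by the edge with that endpoint replaced by $v_C$; edges of contracted graphs are identified with edges of $G$. CLEB walk from $x$ (generic weights): $G_0=G$, $U_0$ the weights, $P_0$ the empty path at $x$, current vertex $v_1=x$; at step $j$, subtract the minimum current weight of the outgoing edges of $v_j$ in $G_{j-1}$ from all these outgoing edges and select the unique outgoing edge $\vec e$ of $v_j$ now of weight $0$; if its head is not on the path $P_{j-1}$, extend the path by $\vec e$ and move to its head (stopping if the head is $\partial$); if its head is a vertex $y$ of $P_{j-1}$, contract the cycle consisting of the part of $P_{j-1}$ from $y$ to $v_j$ and $\vec e$ (keeping the modified weights), truncate the path at $y$, and move to the contracted vertex. LCRW from $x$: same dynamics on paths and contractions, except that at each step the edge $\vec e$ is chosen uniformly at random (with multiplicity, independently of the past) among the outgoing edges of the current vertex in the current contracted graph. *)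

theory Defs
  imports "HOL-Probability.Probability"
begin

text \<open>Multigraph given by its set of oriented edges E (type 'e), tail/head maps and
  the orientation reversal rv; vertex set V (type 'v).\<close>

definition multigraph :: "'v set \<Rightarrow> 'e set \<Rightarrow> ('e \<Rightarrow> 'v) \<Rightarrow> ('e \<Rightarrow> 'v) \<Rightarrow> ('e \<Rightarrow> 'e) \<Rightarrow> bool" where
  "multigraph V E tlv hdv rv \<longleftrightarrow>
     (\<forall>e\<in>E. tlv e \<in> V \<and> hdv e \<in> V \<and> tlv e \<noteq> hdv e \<and>
        rv e \<in> E \<and> rv e \<noteq> e \<and> rv (rv e) = e \<and> tlv (rv e) = hdv e \<and> hdv (rv e) = tlv e)"

definition locally_finite :: "'v set \<Rightarrow> 'e set \<Rightarrow> ('e \<Rightarrow> 'v) \<Rightarrow> bool" where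
  "locally_finite V E tlv \<longleftrightarrow> (\<forall>v\<in>V. finite {e\<in>E. tlv e = v})"

definition connected_graph :: "'v set \<Rightarrow> 'e set \<Rightarrow> ('e \<Rightarrow> 'v) \<Rightarrow> ('e \<Rightarrow> 'v) \<Rightarrow> bool" where
  "connected_graph V E tlv hdv \<longleftrightarrow>
     (\<forall>u\<in>V. \<forall>v\<in>V. (u, v) \<in> {(tlv e, hdv e) | e. e \<in> E}\<^sup>*)"

text \<open>State of the walk: a map sending each vertex of G to the vertex of the current
  contracted graph containing it (a set of vertices of G, initially singletons), and
  the current path as the list of its vertices (vertices of the contracted graph);
  the current vertex is the last entry.\<close>

type_synonym 'v wstate = "('v \<Rightarrow> 'v set) \<times> 'v set list"

definition init_state :: "'v \<Rightarrow> 'v wstate" where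
  "init_state x = ((\<lambda>v. {v}), [{x}])"

text \<open>Outgoing oriented edges of a vertex B of the current contracted graph
  (edges with both endpoints inside B have been removed by contraction).\<close>
definition out_edges :: "'e set \<Rightarrow> ('e \<Rightarrow> 'v) \<Rightarrow> ('e \<Rightarrow> 'v) \<Rightarrow> 'v set \<Rightarrow> 'e set" where
  "out_edges E tlv hdv B = {e\<in>E. tlv e \<in> B \<and> hdv e \<notin> B}"

definition cur_out :: "'e set \<Rightarrow> ('e \<Rightarrow> 'v) \<Rightarrow> ('e \<Rightarrow> 'v) \<Rightarrow> 'v wstate \<Rightarrow> 'e set" where
  "cur_out E tlv hdv st = out_edges E tlv hdv (last (snd st))"

definition stopped :: "'v option \<Rightarrow> 'v wstate \<Rightarrow> bool" where
  "stopped bd st = (case bd of None \<Rightarrow> False | Some d \<Rightarrow> d \<in> last (snd st))"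

text \<open>Path/contraction dynamics after selecting the oriented edge e out of the current
  vertex: extend the path if the head is not on the path, otherwise contract the cycle
  formed by the part of the path from the head to the current vertex plus e, truncate
  the path there and move to the contracted vertex.\<close>
definition walk_step :: "('e \<Rightarrow> 'v) \<Rightarrow> 'v wstate \<Rightarrow> 'e \<Rightarrow> 'v wstate" where
  "walk_step hdv st e =
     (let part = fst st; path = snd st; H = part (hdv e) in
      if H \<in> set path then
        (let C = \<Union> (set (dropWhile (\<lambda>B. B \<noteq> H) path)) in
          ((\<lambda>v. if v \<in> C then C else part v), takeWhile (\<lambda>B. B \<noteq> H) path @ [C]))
      else (part, path @ [H]))"

text \<open>CLEB: the selected edge is the one of minimal current weight among the outgoing
  edges (unique for generic weights, which holds almost surely).\<close>
definition cleb_choice :: "'e set \<Rightarrow> ('e \<Rightarrow> real) \<Rightarrow> 'e" where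
  "cleb_choice Out U = (SOME e. e \<in> Out \<and> (\<forall>f\<in>Out. U e \<le> U f))"

primrec cleb_state ::
  "'e set \<Rightarrow> ('e \<Rightarrow> 'v) \<Rightarrow> ('e \<Rightarrow> 'v) \<Rightarrow> 'v option \<Rightarrow> 'v \<Rightarrow> ('e \<Rightarrow> real) \<Rightarrow> nat
     \<Rightarrow> 'v wstate \<times> ('e \<Rightarrow> real)" where
  "cleb_state E tlv hdv bd x w 0 = (init_state x, w)"
| "cleb_state E tlv hdv bd x w (Suc n) =
     (let st = fst (cleb_state E tlv hdv bd x w n); U = snd (cleb_state E tlv hdv bd x w n) in
      if stopped bd st then (st, U)
      else (let Out = cur_out E tlv hdv st; e = cleb_choice Out U in
        (walk_step hdv st e, (\<lambda>f. if f \<in> Out then U f - U e else U f))))"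

text \<open>Oriented edge selected by CLEB at step n+1 (None once the walk has stopped).\<close>
definition cleb_sel ::
  "'e set \<Rightarrow> ('e \<Rightarrow> 'v) \<Rightarrow> ('e \<Rightarrow> 'v) \<Rightarrow> 'v option \<Rightarrow> 'v \<Rightarrow> ('e \<Rightarrow> real) \<Rightarrow> nat \<Rightarrow> 'e option" where
  "cleb_sel E tlv hdv bd x w n =
     (let st = fst (cleb_state E tlv hdv bd x w n); U = snd (cleb_state E tlv hdv bd x w n) in
      if stopped bd st then None else Some (cleb_choice (cur_out E tlv hdv st) U))"

text \<open>LCRW law: probability that its successive selections (None after stopping)
  begin with the given finite list, each step choosing uniformly (with multiplicity)
  among the outgoing edges of the current vertex, independently of the past.\<close>
fun lcrw_prob ::
  "'e set \<Rightarrow> ('e \<Rightarrow> 'v) \<Rightarrow> ('e \<Rightarrow> 'v) \<Rightarrow> 'v option \<Rightarrow> 'v wstate \<Rightarrow> 'e option list \<Rightarrow> real" where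
  "lcrw_prob E tlv hdv bd st [] = 1"
| "lcrw_prob E tlv hdv bd st (s # ss) =
     (if stopped bd st then (if s = None then lcrw_prob E tlv hdv bd st ss else 0)
      else (case s of None \<Rightarrow> 0
            | Some e \<Rightarrow> if e \<in> cur_out E tlv hdv st
                       then lcrw_prob E tlv hdv bd (walk_step hdv st e) ss / real (card (cur_out E tlv hdv st))
                       else 0))"

definition exp_weights :: "'e set \<Rightarrow> ('e \<Rightarrow> real) measure" where
  "exp_weights E = PiM E (\<lambda>_. density lborel (exponential_density 1))"

end

theory Submission
  imports Defs
begin



abbreviation Ex :: "real measure" where "Ex \<equiv> density lborel (exponential_density 1)"

definition rel :: "bool \<Rightarrow> real \<Rightarrow> real \<Rightarrow> bool" where
  "rel b a c = (if b then a < c else a \<le> c)"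

lemma prob_Ex: "prob_space Ex"
  by (rule prob_space_exponential_density) simp

lemma sets_Ex[simp]: "sets Ex = sets borel" by simp
lemma space_Ex[simp]: "space Ex = UNIV" by simp

lemma dens_eq: "exponential_density 1 s = (if s < 0 then 0 else exp (- s))"
  by (simp add: exponential_density_def)

lemma memoryless:
  fixes x :: real
  assumes x: "0 \<le> x" and Y: "Y \<in> sets borel"
  shows "emeasure Ex {s. rel b x s \<and> s - x \<in> Y} = ennreal (exp (- x)) * emeasure Ex Y"
proof -
  have Zm: "{s. rel b x s \<and> s - x \<in> Y} \<in> sets borel"
    unfolding rel_def using Y by (cases b) (simp_all add: pred_def, measurable)
  let ?g = "\<lambda>s. ennreal (exponential_density 1 s) * indicator {s. rel b x s \<and> s - x \<in> Y} s"
  have "emeasure Ex {s. rel b x s \<and> s - x \<in> Y} = (\<integral>\<^sup>+ s. ?g s \<partial>lborel)"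
    using Zm by (subst emeasure_density) (auto intro!: nn_integral_cong simp: mult.commute)
  also have "\<dots> = (\<integral>\<^sup>+ u. ?g (x + 1 * u) \<partial>lborel)"
    using nn_integral_real_affine[of ?g 1 x] Zm by simp
  also have "\<dots> = (\<integral>\<^sup>+ u. ennreal (exp (- x)) * (ennreal (exponential_density 1 u) * indicator Y u) \<partial>lborel)"
  proof (rule nn_integral_cong_AE)
    show "AE u in lborel. ?g (x + 1 * u) = ennreal (exp (- x)) * (ennreal (exponential_density 1 u) * indicator Y u)"
      using AE_lborel_singleton[of "0::real"]
    proof eventually_elim
      case (elim u)
      show ?case
      proof (cases "u < 0")
        case True then show ?thesis using x by (auto simp: rel_def dens_eq indicator_def)
      next
        case False
        then have "u > 0" using elim by simp
        then show ?thesis using x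
          by (auto simp: rel_def dens_eq indicator_def exp_add[symmetric] ennreal_mult[symmetric])
      qed
    qed
  qed
  also have "\<dots> = ennreal (exp (- x)) * (\<integral>\<^sup>+ u. ennreal (exponential_density 1 u) * indicator Y u \<partial>lborel)"
    using Y by (subst nn_integral_cmult) auto
  also have "(\<integral>\<^sup>+ u. ennreal (exponential_density 1 u) * indicator Y u \<partial>lborel) = emeasure Ex Y"
    using Y by (subst emeasure_density) (auto intro!: nn_integral_cong simp: mult.commute)
  finally show ?thesis .
qed




lemma scale_int:
  fixes A :: "real set"
  assumes n: "n \<ge> 1" and A: "A \<in> sets borel"
  shows "(\<integral>\<^sup>+ x. ennreal (exponential_density 1 x) * ennreal (exp (- x)) ^ (n - 1) * indicator A (real n * x) \<partial>lborel)
         = emeasure Ex A / of_nat n"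
proof -
  let ?h = "\<lambda>s. ennreal (exponential_density 1 s) * indicator A s"
  have hm: "?h \<in> borel_measurable borel" using A by measurable
  have "emeasure Ex A = (\<integral>\<^sup>+ s. ?h s \<partial>lborel)"
    using A by (subst emeasure_density) (auto intro!: nn_integral_cong simp: mult.commute)
  also have "\<dots> = ennreal \<bar>real n\<bar> * (\<integral>\<^sup>+ x. ?h (0 + real n * x) \<partial>lborel)"
    using nn_integral_real_affine[OF hm, of "real n" 0] n by simp
  also have "(\<integral>\<^sup>+ x. ?h (0 + real n * x) \<partial>lborel) =
     (\<integral>\<^sup>+ x. ennreal (exponential_density 1 x) * ennreal (exp (- x)) ^ (n - 1) * indicator A (real n * x) \<partial>lborel)"
  proof (rule nn_integral_cong)
    fix x :: real
    have e: "exp (- (real n * x)) = exp (- x) * exp (- x) ^ (n - 1)"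
    proof -
      have "exp (- x) * exp (- x) ^ (n - 1) = exp (- x) ^ n"
        using n by (metis Suc_diff_le diff_Suc_1 power_Suc)
      also have "\<dots> = exp (- (real n * x))" by (simp add: exp_of_nat_mult[symmetric])
      finally show ?thesis by simp
    qed
    show "?h (0 + real n * x) = ennreal (exponential_density 1 x) * ennreal (exp (- x)) ^ (n - 1) * indicator A (real n * x)"
    proof (cases "x < 0")
      case True
      then have "real n * x < 0" using n by (simp add: mult_pos_neg)
      then show ?thesis using True by (simp add: dens_eq)
    next
      case False
      then have "\<not> real n * x < 0" by (simp add: not_less)
      then show ?thesis using False
        by (simp add: dens_eq e ennreal_mult ennreal_power[symmetric] mult.assoc)
    qed
  qed
  finally have eq: "emeasure Ex A = of_nat n * (\<integral>\<^sup>+ x. ennreal (exponential_density 1 x) * ennreal (exp (- x)) ^ (n - 1) * indicator A (real n * x) \<partial>lborel)"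
    by (simp add: ennreal_of_nat_eq_real_of_nat)
  have nz: "(of_nat n :: ennreal) \<noteq> 0" using n by simp
  show ?thesis
    by (subst eq, subst mult.commute, rule ennreal_mult_divide_eq[symmetric, OF nz], simp)
qed




definition Tm :: "'e set \<Rightarrow> 'e \<Rightarrow> ('e \<Rightarrow> real) \<Rightarrow> ('e \<Rightarrow> real)" where
  "Tm Ou e w = (\<lambda>f. if f \<in> Ou - {e} then w f - w e else if f = e then real (card Ou) * w e else w f)"

lemma PE: "product_prob_space (\<lambda>_. Ex)"
  unfolding product_prob_space_def product_sigma_finite_def product_prob_space_axioms_def
  using prob_Ex by (auto simp: prob_space_imp_sigma_finite)

lemma prob_PE: "prob_space (PiM I (\<lambda>_. Ex))"
  using prob_space_PiM[of I "\<lambda>_. Ex"] prob_Ex by simp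

lemma Tm_space:
  assumes "Ou \<subseteq> E" "e \<in> Ou" "w \<in> space (PiM E (\<lambda>_. Ex))"
  shows "Tm Ou e w \<in> space (PiM E (\<lambda>_. Ex))"
  using assms by (auto simp: space_PiM Tm_def PiE_def extensional_def)

lemma Tm_meas:
  assumes "Ou \<subseteq> E" "e \<in> Ou"
  shows "Tm Ou e \<in> measurable (PiM E (\<lambda>_. Ex)) (PiM E (\<lambda>_. Ex))"
proof -
  have eE: "e \<in> E" using assms by auto
  have "(\<lambda>w i. Tm Ou e w i) \<in> measurable (PiM E (\<lambda>_. Ex)) (PiM E (\<lambda>_. Ex))"
  proof (rule measurable_PiM_single')
    fix i assume i: "i \<in> E"
    have "(\<lambda>w. Tm Ou e w i) = (if i \<in> Ou - {e} then (\<lambda>w. w i - w e) else if i = e then (\<lambda>w. real (card Ou) * w e) else (\<lambda>w. w i))"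
      by (auto simp: Tm_def)
    moreover have "(\<lambda>w. w i - w e) \<in> measurable (PiM E (\<lambda>_. Ex)) Ex"
      using i eE by (simp add: measurable_cong_sets[OF refl sets_Ex]) measurable
    moreover have "(\<lambda>w. real (card Ou) * w e) \<in> measurable (PiM E (\<lambda>_. Ex)) Ex"
      using i eE by (simp add: measurable_cong_sets[OF refl sets_Ex]) measurable
    moreover have "(\<lambda>w. w i) \<in> measurable (PiM E (\<lambda>_. Ex)) Ex"
      using i by measurable
    ultimately show "(\<lambda>w. Tm Ou e w i) \<in> measurable (PiM E (\<lambda>_. Ex)) Ex" by simp
  next
    show "(\<lambda>w i. Tm Ou e w i) \<in> space (PiM E (\<lambda>_. Ex)) \<rightarrow> (\<Pi>\<^sub>E i\<in>E. space Ex)"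
      using Tm_space[OF assms] by (auto simp: space_PiM)
  qed
  then show ?thesis by simp
qed

lemma S_meas:
  assumes "finite Ou" "Ou \<subseteq> E" "e \<in> Ou"
  shows "{w \<in> space (PiM E (\<lambda>_. Ex)). \<forall>f\<in>Ou-{e}. rel b (w e) (w f)} \<in> sets (PiM E (\<lambda>_. Ex))"
proof -
  have "\<And>f. f \<in> Ou - {e} \<Longrightarrow> {w \<in> space (PiM E (\<lambda>_. Ex)). rel b (w e) (w f)} \<in> sets (PiM E (\<lambda>_. Ex))"
  proof -
    fix f assume f: "f \<in> Ou - {e}"
    then have [measurable]: "f \<in> E" "e \<in> E" using assms by auto
    show "{w \<in> space (PiM E (\<lambda>_. Ex)). rel b (w e) (w f)} \<in> sets (PiM E (\<lambda>_. Ex))"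
      unfolding rel_def by (cases b) simp_all
  qed
  then show ?thesis
    using assms by (intro sets.sets_Collect_finite_All) auto
qed




lemma cyl:
  assumes fin: "finite Ou" "Ou \<subseteq> E" "e \<in> Ou" and J: "finite J" "J \<subseteq> E"
    and Aj: "\<And>j. j \<in> J \<Longrightarrow> Aj j \<in> sets borel"
  shows "emeasure (PiM E (\<lambda>_. Ex)) {w \<in> space (PiM E (\<lambda>_. Ex)). (\<forall>f\<in>Ou-{e}. rel b (w e) (w f)) \<and> (\<forall>j\<in>J. Tm Ou e w j \<in> Aj j)}
     = (\<Prod>j\<in>J. emeasure Ex (Aj j)) / of_nat (card Ou)"
proof -
  define M where "M = PiM E (\<lambda>_. Ex)"
  define N where "N = PiM (E - {e}) (\<lambda>_. Ex)"
  define Z where "Z = {w \<in> space M. (\<forall>f\<in>Ou-{e}. rel b (w e) (w f)) \<and> (\<forall>j\<in>J. Tm Ou e w j \<in> Aj j)}"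
  define n where "n = card Ou"
  define A2 where "A2 = (\<lambda>f. if f \<in> J then Aj f else UNIV)"
  define K where "K = (Ou \<union> J) - {e}"
  define B where "B = (\<lambda>x f. if f \<in> Ou then {s. rel b x s \<and> s - x \<in> A2 f} else A2 f)"
  define g where "g = (\<lambda>(x::real, X::'a \<Rightarrow> real). X(e := x))"
  have eE: "e \<in> E" using fin by auto
  have n1: "n \<ge> 1" using fin unfolding n_def by (metis card_0_eq empty_iff less_one not_less)
  have A2m: "A2 f \<in> sets borel" for f using Aj by (auto simp: A2_def)
  have Bm: "B x f \<in> sets borel" for x f
  proof -
    have "{s. rel b x s \<and> s - x \<in> A2 f} \<in> sets borel"
      using A2m[of f] unfolding rel_def by (cases b) (simp_all add: pred_def, measurable)
    then show ?thesis using A2m by (simp add: B_def)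
  qed
  interpret PN: product_prob_space "\<lambda>_. Ex" "E - {e}" using PE .
  interpret N: prob_space N unfolding N_def by (rule prob_PE)
  have Meq: "M = distr (Ex \<Otimes>\<^sub>M N) M g"
  proof -
    have "distr (Ex \<Otimes>\<^sub>M N) (PiM (insert e (E - {e})) (\<lambda>_. Ex)) (\<lambda>(x, X). X(e := x)) = PiM (insert e (E - {e})) (\<lambda>_. Ex)"
      unfolding N_def by (rule distr_pair_PiM_eq_PiM) (simp_all add: prob_Ex)
    moreover have "insert e (E - {e}) = E" using eE by auto
    ultimately show ?thesis unfolding M_def g_def by simp
  qed
  have gm: "g \<in> measurable (Ex \<Otimes>\<^sub>M N) M"
    unfolding g_def M_def N_def case_prod_beta'
    by (rule measurable_fun_upd[where J="E - {e}"]) (use eE in auto)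
  have Zm: "Z \<in> sets M"
  proof -
    have "(\<lambda>w. Tm Ou e w j) \<in> borel_measurable M" if "j \<in> E" for j
      using measurable_compose[OF Tm_meas[OF fin(2,3)] measurable_component_singleton[OF that, of "\<lambda>_. Ex"]]
      unfolding M_def by (simp add: measurable_cong_sets[OF refl sets_Ex])
    then have "{w \<in> space M. Tm Ou e w j \<in> Aj j} \<in> sets M" if "j \<in> J" for j
      using that J Aj by (auto intro!: measurable_sets_borel)
    then have 1: "{w \<in> space M. \<forall>j\<in>J. Tm Ou e w j \<in> Aj j} \<in> sets M"
      using J by (intro sets.sets_Collect_finite_All) auto
    have 2: "{w \<in> space M. \<forall>f\<in>Ou-{e}. rel b (w e) (w f)} \<in> sets M"
      unfolding M_def by (rule S_meas[OF fin])
    have "Z = {w \<in> space M. \<forall>f\<in>Ou-{e}. rel b (w e) (w f)} \<inter> {w \<in> space M. \<forall>j\<in>J. Tm Ou e w j \<in> Aj j}"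
      unfolding Z_def by auto
    then show ?thesis using 1 2 by auto
  qed
  have "emeasure M Z = emeasure (Ex \<Otimes>\<^sub>M N) (g -` Z \<inter> space (Ex \<Otimes>\<^sub>M N))"
    by (subst Meq) (rule emeasure_distr[OF gm Zm])
  also have "\<dots> = (\<integral>\<^sup>+ x. emeasure N (Pair x -` (g -` Z \<inter> space (Ex \<Otimes>\<^sub>M N))) \<partial>Ex)"
    using measurable_sets[OF gm Zm] by (rule N.emeasure_pair_measure_alt)
  also have "\<dots> = (\<integral>\<^sup>+ x. indicator (A2 e) (real n * x) * ((\<Prod>f\<in>K. emeasure Ex (B x f))) \<partial>Ex)"
  proof (rule nn_integral_cong)
    fix x :: real
    have sec: "Pair x -` (g -` Z \<inter> space (Ex \<Otimes>\<^sub>M N)) =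
      (if real n * x \<in> A2 e then {X \<in> space N. \<forall>f\<in>K. X f \<in> B x f} else {})"
    proof (rule set_eqI)
      fix X :: "'a \<Rightarrow> real"
      have spN: "X \<in> space N \<Longrightarrow> X(e := x) \<in> space M"
        unfolding N_def M_def using eE by (auto simp: space_PiM PiE_def extensional_def split: if_splits)
      have "X \<in> space N \<Longrightarrow> X(e := x) \<in> Z \<longleftrightarrow> real n * x \<in> A2 e \<and> (\<forall>f\<in>K. X f \<in> B x f)"
        unfolding Z_def using fin spN
        by (auto simp: Tm_def K_def B_def A2_def n_def)
      then show "X \<in> Pair x -` (g -` Z \<inter> space (Ex \<Otimes>\<^sub>M N)) \<longleftrightarrow> X \<in> (if real n * x \<in> A2 e then {X \<in> space N. \<forall>f\<in>K. X f \<in> B x f} else {})"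
        by (auto simp: g_def space_pair_measure)
    qed
    have "emeasure N {X \<in> space N. \<forall>f\<in>K. X f \<in> B x f} = (\<Prod>f\<in>K. emeasure Ex (B x f))"
      unfolding N_def using fin J Bm by (intro PN.emeasure_PiM_Collect) (auto simp: K_def)
    then show "emeasure N (Pair x -` (g -` Z \<inter> space (Ex \<Otimes>\<^sub>M N))) = indicator (A2 e) (real n * x) * ((\<Prod>f\<in>K. emeasure Ex (B x f)))"
      unfolding sec by (simp add: indicator_def)
  qed
  also have "\<dots> = (\<integral>\<^sup>+ x. indicator (A2 e) (real n * x) * (ennreal (exp (- x)) ^ (n - 1) * (\<Prod>f\<in>K. emeasure Ex (A2 f))) \<partial>Ex)"
  proof (rule nn_integral_cong_AE)
    have "AE x in Ex. 0 \<le> x"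
      by (subst AE_density) (auto simp: dens_eq split: if_splits)
    then show "AE x in Ex. indicator (A2 e) (real n * x) * ((\<Prod>f\<in>K. emeasure Ex (B x f))) =
       indicator (A2 e) (real n * x) * (ennreal (exp (- x)) ^ (n - 1) * (\<Prod>f\<in>K. emeasure Ex (A2 f)))"
    proof eventually_elim
      case (elim x)
      have "(\<Prod>f\<in>K. emeasure Ex (B x f)) = (\<Prod>f\<in>K. (if f \<in> Ou then ennreal (exp (- x)) else 1) * emeasure Ex (A2 f))"
        using memoryless[OF elim A2m] by (auto simp: B_def intro!: prod.cong)
      also have "\<dots> = (\<Prod>f\<in>K. (if f \<in> Ou then ennreal (exp (- x)) else 1)) * (\<Prod>f\<in>K. emeasure Ex (A2 f))"
        by (rule prod.distrib)
      also have "(\<Prod>f\<in>K. (if f \<in> Ou then ennreal (exp (- x)) else 1)) = ennreal (exp (- x)) ^ (n - 1)"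
      proof -
        have fK: "finite K" using fin J by (auto simp: K_def)
        have "(\<Prod>f\<in>K. (if f \<in> Ou then ennreal (exp (- x)) else 1)) = (\<Prod>f\<in>K \<inter> {f. f \<in> Ou}. ennreal (exp (- x))) * (\<Prod>f\<in>K \<inter> - {f. f \<in> Ou}. 1)"
          by (rule prod.If_cases[OF fK])
        also have "K \<inter> {f. f \<in> Ou} = Ou - {e}" by (auto simp: K_def)
        finally show ?thesis using fin by (simp add: n_def)
      qed
      finally show ?case by simp
    qed
  qed
  also have "\<dots> = (\<integral>\<^sup>+ x. ennreal (exponential_density 1 x) * (indicator (A2 e) (real n * x) * (ennreal (exp (- x)) ^ (n - 1) * (\<Prod>f\<in>K. emeasure Ex (A2 f)))) \<partial>lborel)"
    using A2m[of e] by (subst nn_integral_density) auto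
  also have "\<dots> = (\<integral>\<^sup>+ x. (\<Prod>f\<in>K. emeasure Ex (A2 f)) * (ennreal (exponential_density 1 x) * ennreal (exp (- x)) ^ (n - 1) * indicator (A2 e) (real n * x)) \<partial>lborel)"
    by (rule nn_integral_cong) (simp add: ac_simps)
  also have "\<dots> = (\<Prod>f\<in>K. emeasure Ex (A2 f)) * (\<integral>\<^sup>+ x. ennreal (exponential_density 1 x) * ennreal (exp (- x)) ^ (n - 1) * indicator (A2 e) (real n * x) \<partial>lborel)"
    using A2m[of e] by (subst nn_integral_cmult) auto
  also have "\<dots> = (\<Prod>f\<in>K. emeasure Ex (A2 f)) * (emeasure Ex (A2 e) / of_nat n)"
    using scale_int[OF n1 A2m[of e]] by simp
  also have "\<dots> = ((\<Prod>f\<in>K. emeasure Ex (A2 f)) * emeasure Ex (A2 e)) / of_nat n"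
    by (simp add: ennreal_times_divide)
  also have "(\<Prod>f\<in>K. emeasure Ex (A2 f)) * emeasure Ex (A2 e) = (\<Prod>j\<in>J. emeasure Ex (Aj j))"
  proof -
    have fK: "finite (Ou \<union> J)" using fin J by auto
    have "(\<Prod>f\<in>K. emeasure Ex (A2 f)) * emeasure Ex (A2 e) = (\<Prod>f\<in>Ou \<union> J. emeasure Ex (A2 f))"
      using prod.remove[OF fK, of e "\<lambda>f. emeasure Ex (A2 f)"] fin unfolding K_def by (simp add: mult.commute)
    also have "\<dots> = (\<Prod>j\<in>J. emeasure Ex (A2 j))"
      using fK prob_space.emeasure_space_1[OF prob_Ex]
      by (intro prod.mono_neutral_right) (auto simp: A2_def)
    also have "\<dots> = (\<Prod>j\<in>J. emeasure Ex (Aj j))" by (simp add: A2_def)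
    finally show ?thesis .
  qed
  finally show ?thesis unfolding Z_def M_def n_def .
qed




lemma core:
  assumes fin: "finite Ou" "Ou \<subseteq> E" "e \<in> Ou" and A: "A \<in> sets (PiM E (\<lambda>_. Ex))"
  shows "emeasure (PiM E (\<lambda>_. Ex)) ({w \<in> space (PiM E (\<lambda>_. Ex)). \<forall>f\<in>Ou-{e}. rel b (w e) (w f)} \<inter> Tm Ou e -` A)
     = emeasure (PiM E (\<lambda>_. Ex)) A / of_nat (card Ou)"
proof -
  define M where "M = PiM E (\<lambda>_. Ex)"
  define S where "S = {w \<in> space M. \<forall>f\<in>Ou-{e}. rel b (w e) (w f)}"
  define P where "P = distr (density M (indicator S)) M (Tm Ou e)"
  define Q where "Q = scale_measure (1 / of_nat (card Ou)) M"
  interpret PM: product_prob_space "\<lambda>_. Ex" E using PE .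
  have Sm: "S \<in> sets M" unfolding S_def M_def by (rule S_meas[OF fin])
  have Tmm: "Tm Ou e \<in> measurable (density M (indicator S)) M"
    using Tm_meas[OF fin(2,3)] unfolding M_def by simp
  have n0: "card Ou \<noteq> 0" using fin by auto
  have "Q = P"
  proof (rule measure_eqI_PiM_infinite[of Q E "\<lambda>_. Ex" P])
    show "sets Q = sets (PiM E (\<lambda>_. Ex))" by (simp add: Q_def M_def)
    show "sets P = sets (PiM E (\<lambda>_. Ex))" by (simp add: P_def M_def)
    show "finite_measure Q"
      by (rule finite_measureI) (simp add: Q_def M_def space_scale_measure PM.emeasure_space_1 n0 ennreal_divide_eq_top_iff)
  next
    fix J Aj assume J: "finite J" "J \<subseteq> E" and Aj: "\<And>i. i \<in> J \<Longrightarrow> Aj i \<in> sets Ex"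
    let ?X = "prod_emb E (\<lambda>_. Ex) J (Pi\<^sub>E J Aj)"
    have Xm: "?X \<in> sets M" unfolding M_def using J Aj by (intro sets_PiM_I) auto
    have "emeasure Q ?X = 1 / of_nat (card Ou) * (\<Prod>j\<in>J. emeasure Ex (Aj j))"
      unfolding Q_def M_def using J Aj by (simp add: PM.emeasure_PiM_emb)
    also have "\<dots> = (\<Prod>j\<in>J. emeasure Ex (Aj j)) / of_nat (card Ou)"
      by (simp add: ennreal_divide_times ennreal_times_divide)
    also have "\<dots> = emeasure M {w \<in> space M. (\<forall>f\<in>Ou-{e}. rel b (w e) (w f)) \<and> (\<forall>j\<in>J. Tm Ou e w j \<in> Aj j)}"
      unfolding M_def using J Aj by (intro cyl[symmetric] fin) auto
    also have "{w \<in> space M. (\<forall>f\<in>Ou-{e}. rel b (w e) (w f)) \<and> (\<forall>j\<in>J. Tm Ou e w j \<in> Aj j)} = S \<inter> (Tm Ou e -` ?X \<inter> space M)"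
      using Tm_space[OF fin(2,3)] J unfolding S_def M_def
      by (auto simp: prod_emb_def space_PiM PiE_iff extensional_def)
    also have "emeasure M (S \<inter> (Tm Ou e -` ?X \<inter> space M)) = emeasure P ?X"
    proof -
      have pm: "Tm Ou e -` ?X \<inter> space M \<in> sets M"
        using measurable_sets[OF Tm_meas[OF fin(2,3)], of ?X] Xm by (simp add: M_def)
      show ?thesis
        unfolding P_def emeasure_distr[OF Tmm Xm] using emeasure_restricted[OF Sm pm] by simp
    qed
    finally show "emeasure Q ?X = emeasure P ?X" .
  qed
  have Am: "A \<in> sets M" using A by (simp add: M_def)
  have pm: "Tm Ou e -` A \<inter> space M \<in> sets M"
    using measurable_sets[OF Tm_meas[OF fin(2,3)] A] by (simp add: M_def)
  have "emeasure P A = emeasure M (S \<inter> (Tm Ou e -` A \<inter> space M))"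
    unfolding P_def emeasure_distr[OF Tmm Am] using emeasure_restricted[OF Sm pm] by simp
  also have "S \<inter> (Tm Ou e -` A \<inter> space M) = S \<inter> Tm Ou e -` A" unfolding S_def by auto
  finally have "emeasure M (S \<inter> Tm Ou e -` A) = emeasure Q A" using \<open>Q = P\<close> by simp
  then show ?thesis unfolding Q_def S_def M_def by (simp add: ennreal_divide_times ennreal_times_divide)
qed




lemma choice_props:
  fixes U :: "'e \<Rightarrow> real"
  assumes "finite Ou" "Ou \<noteq> {}"
  shows "cleb_choice Ou U \<in> Ou \<and> (\<forall>f\<in>Ou. U (cleb_choice Ou U) \<le> U f)"
proof -
  have "Min (U ` Ou) \<in> U ` Ou" using assms by (intro Min_in) auto
  then obtain e where e: "e \<in> Ou" "U e = Min (U ` Ou)" by auto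
  have "\<forall>f\<in>Ou. U e \<le> U f"
  proof
    fix f assume f: "f \<in> Ou"
    have "Min (U ` Ou) \<le> U f" by (rule Min_le) (use assms(1) f in simp_all)
    then show "U e \<le> U f" using e(2) by simp
  qed
  then have "e \<in> Ou \<and> (\<forall>f\<in>Ou. U e \<le> U f)" using e(1) by simp
  then show ?thesis unfolding cleb_choice_def by (rule someI2) simp
qed

lemma choice_strict:
  fixes U :: "'e \<Rightarrow> real"
  assumes "e \<in> Ou" "\<forall>f\<in>Ou-{e}. U e < U f"
  shows "cleb_choice Ou U = e"
  unfolding cleb_choice_def
proof (rule some_equality)
  have "U e \<le> U f" if "f \<in> Ou" for f
    using assms that by (cases "f = e") (auto intro: less_imp_le)
  then show "e \<in> Ou \<and> (\<forall>f\<in>Ou. U e \<le> U f)" using assms by blast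
  fix x assume x: "x \<in> Ou \<and> (\<forall>f\<in>Ou. U x \<le> U f)"
  show "x = e"
  proof (rule ccontr)
    assume "x \<noteq> e"
    then have "U e < U x" using assms x by blast
    moreover have "U x \<le> U e" using x assms(1) by blast
    ultimately show False by simp
  qed
qed

lemma choice_cong:
  assumes "\<And>f. f \<in> Ou \<Longrightarrow> U f = U' f"
  shows "cleb_choice Ou U = cleb_choice Ou U'"
proof -
  have "(\<lambda>e. e \<in> Ou \<and> (\<forall>f\<in>Ou. U e \<le> U f)) = (\<lambda>e. e \<in> Ou \<and> (\<forall>f\<in>Ou. U' e \<le> U' f))"
  proof (rule ext)
    fix e
    show "(e \<in> Ou \<and> (\<forall>f\<in>Ou. U e \<le> U f)) = (e \<in> Ou \<and> (\<forall>f\<in>Ou. U' e \<le> U' f))"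
      using assms by (cases "e \<in> Ou") simp_all
  qed
  then show ?thesis unfolding cleb_choice_def by simp
qed

lemma choice_meas:
  assumes fin: "finite Ou" "Ou \<subseteq> E"
  shows "{w \<in> space (PiM E (\<lambda>_. Ex)). cleb_choice Ou w = e} \<in> sets (PiM E (\<lambda>_. Ex))"
proof -
  define M where "M = PiM E (\<lambda>_. Ex)"
  define AM where "AM = (\<lambda>w::'a \<Rightarrow> real. {f\<in>Ou. \<forall>g\<in>Ou. w f \<le> w g})"
  have c: "cleb_choice Ou w = (SOME f. f \<in> AM w)" for w
    unfolding cleb_choice_def AM_def by simp
  have "{w \<in> space M. cleb_choice Ou w = e} = (\<Union>S\<in>{S. S \<in> Pow Ou \<and> (SOME f. f \<in> S) = e}. {w \<in> space M. \<forall>f\<in>Ou. (f \<in> S \<longleftrightarrow> (\<forall>g\<in>Ou. w f \<le> w g))})"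
  proof (rule set_eqI, rule iffI)
    fix w assume w: "w \<in> {w \<in> space M. cleb_choice Ou w = e}"
    then show "w \<in> (\<Union>S\<in>{S. S \<in> Pow Ou \<and> (SOME f. f \<in> S) = e}. {w \<in> space M. \<forall>f\<in>Ou. (f \<in> S \<longleftrightarrow> (\<forall>g\<in>Ou. w f \<le> w g))})"
      by (intro UN_I[where a="AM w"]) (auto simp: c AM_def)
  next
    fix w assume "w \<in> (\<Union>S\<in>{S. S \<in> Pow Ou \<and> (SOME f. f \<in> S) = e}. {w \<in> space M. \<forall>f\<in>Ou. (f \<in> S \<longleftrightarrow> (\<forall>g\<in>Ou. w f \<le> w g))})"
    then obtain S where S: "S \<subseteq> Ou" "(SOME f. f \<in> S) = e" "w \<in> space M" "\<forall>f\<in>Ou. (f \<in> S \<longleftrightarrow> (\<forall>g\<in>Ou. w f \<le> w g))"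
      by auto
    then have "AM w = S" unfolding AM_def by auto
    then show "w \<in> {w \<in> space M. cleb_choice Ou w = e}" using S by (simp add: c)
  qed
  also have "\<dots> \<in> sets M"
  proof (rule sets.finite_UN)
    show "finite {S. S \<in> Pow Ou \<and> (SOME f. f \<in> S) = e}" using fin by simp
    fix S assume "S \<in> {S. S \<in> Pow Ou \<and> (SOME f. f \<in> S) = e}"
    have "{w \<in> space M. (f \<in> S \<longleftrightarrow> (\<forall>g\<in>Ou. w f \<le> w g))} \<in> sets M" if f: "f \<in> Ou" for f
    proof -
      have [measurable]: "f \<in> E" using f fin by auto
      have "{w \<in> space M. w f \<le> w g} \<in> sets M" if "g \<in> Ou" for g
      proof -
        have [measurable]: "g \<in> E" using that fin by auto
        show ?thesis unfolding M_def by measurable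
      qed
      then have 1: "{w \<in> space M. \<forall>g\<in>Ou. w f \<le> w g} \<in> sets M"
        using fin by (intro sets.sets_Collect_finite_All) auto
      show ?thesis
      proof (cases "f \<in> S")
        case True then show ?thesis using 1 by simp
      next
        case False
        have "{w \<in> space M. (f \<in> S \<longleftrightarrow> (\<forall>g\<in>Ou. w f \<le> w g))} = space M - {w \<in> space M. \<forall>g\<in>Ou. w f \<le> w g}"
          using False by auto
        then show ?thesis using 1 by auto
      qed
    qed
    then show "{w \<in> space M. \<forall>f\<in>Ou. (f \<in> S \<longleftrightarrow> (\<forall>g\<in>Ou. w f \<le> w g))} \<in> sets M"
      using fin by (intro sets.sets_Collect_finite_All) auto
  qed
  finally show ?thesis unfolding M_def .
qed

lemma choice_prob:
  assumes fin: "finite Ou" "Ou \<subseteq> E" "e \<in> Ou" and A: "A \<in> sets (PiM E (\<lambda>_. Ex))"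
  shows "emeasure (PiM E (\<lambda>_. Ex)) ({w \<in> space (PiM E (\<lambda>_. Ex)). cleb_choice Ou w = e} \<inter> Tm Ou e -` A)
     = emeasure (PiM E (\<lambda>_. Ex)) A / of_nat (card Ou)"
proof -
  define M where "M = PiM E (\<lambda>_. Ex)"
  let ?C = "{w \<in> space M. cleb_choice Ou w = e}"
  let ?S1 = "{w \<in> space M. \<forall>f\<in>Ou-{e}. rel True (w e) (w f)}"
  let ?S2 = "{w \<in> space M. \<forall>f\<in>Ou-{e}. rel False (w e) (w f)}"
  have pm: "Tm Ou e -` A \<inter> space M \<in> sets M"
    using measurable_sets[OF Tm_meas[OF fin(2,3)] A] by (simp add: M_def)
  have m: "X \<in> sets M \<Longrightarrow> X \<inter> Tm Ou e -` A \<in> sets M" if "X \<subseteq> space M" for X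
  proof -
    assume "X \<in> sets M"
    moreover have "X \<inter> Tm Ou e -` A = X \<inter> (Tm Ou e -` A \<inter> space M)" using that by auto
    ultimately show ?thesis using pm by auto
  qed
  have Cm: "?C \<in> sets M" unfolding M_def by (rule choice_meas[OF fin(1,2)])
  have S2m: "?S2 \<in> sets M" unfolding M_def by (rule S_meas[OF fin])
  have "?S1 \<subseteq> ?C"
  proof
    fix w assume "w \<in> ?S1"
    then have "w \<in> space M" "\<forall>f\<in>Ou-{e}. w e < w f" by (simp_all add: rel_def)
    then show "w \<in> ?C" using choice_strict[of e Ou w] fin(3) by simp
  qed
  moreover have "?C \<subseteq> ?S2"
  proof
    fix w assume w: "w \<in> ?C"
    have "Ou \<noteq> {}" using fin(3) by blast
    then have "\<forall>f\<in>Ou. w (cleb_choice Ou w) \<le> w f" using choice_props[OF fin(1)] by blast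
    then show "w \<in> ?S2" using w by (simp add: rel_def)
  qed
  have C1: "?C \<inter> Tm Ou e -` A \<in> sets M" by (rule m[OF _ Cm]) auto
  have C2: "?S2 \<inter> Tm Ou e -` A \<in> sets M" by (rule m[OF _ S2m]) auto
  have "emeasure M (?S1 \<inter> Tm Ou e -` A) \<le> emeasure M (?C \<inter> Tm Ou e -` A)"
    by (rule emeasure_mono[OF _ C1]) (use \<open>?S1 \<subseteq> ?C\<close> in blast)
  moreover have "emeasure M (?C \<inter> Tm Ou e -` A) \<le> emeasure M (?S2 \<inter> Tm Ou e -` A)"
    by (rule emeasure_mono[OF _ C2]) (use \<open>?C \<subseteq> ?S2\<close> in blast)
  moreover have "emeasure M (?S1 \<inter> Tm Ou e -` A) = emeasure M A / of_nat (card Ou)"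
    "emeasure M (?S2 \<inter> Tm Ou e -` A) = emeasure M A / of_nat (card Ou)"
    unfolding M_def by (rule core[OF fin A])+
  ultimately show ?thesis unfolding M_def by (simp add: M_def)
qed




locale GG =
  fixes V :: "'v set" and E :: "'e set" and tlv hdv :: "'e \<Rightarrow> 'v" and rv :: "'e \<Rightarrow> 'e"
    and bd :: "'v option"
  assumes mg: "multigraph V E tlv hdv rv"
    and lf: "locally_finite V E tlv"
    and cg: "connected_graph V E tlv hdv"
    and bdc: "(finite V \<and> (\<exists>d\<in>V. bd = Some d)) \<or> (infinite V \<and> bd = None)"
begin

definition wvalid :: "'v wstate \<Rightarrow> bool" where
  "wvalid st \<longleftrightarrow> (\<forall>v. v \<in> fst st v) \<and> (\<forall>u v. v \<in> fst st u \<longrightarrow> fst st v = fst st u)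
     \<and> (\<forall>B\<in>set (snd st). \<exists>v. B = fst st v) \<and> distinct (snd st) \<and> snd st \<noteq> []
     \<and> (\<forall>B\<in>set (snd st). finite B \<and> B \<subseteq> V) \<and> (\<forall>v. fst st v \<in> set (snd st) \<or> fst st v = {v})"

definition wdead :: "'v wstate \<Rightarrow> 'e \<Rightarrow> bool" where
  "wdead st d \<longleftrightarrow> fst st (tlv d) = fst st (hdv d) \<or>
     (\<exists>i. Suc i < length (snd st) \<and> snd st ! i = fst st (tlv d) \<and> snd st ! Suc i = fst st (hdv d))"

lemma wvD:
  assumes "wvalid st"
  shows "\<And>v. v \<in> fst st v"
    and "\<And>u v. v \<in> fst st u \<Longrightarrow> fst st v = fst st u"
    and "\<And>B. B \<in> set (snd st) \<Longrightarrow> \<exists>v. B = fst st v"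
    and "distinct (snd st)" and "snd st \<noteq> []"
    and "\<And>B. B \<in> set (snd st) \<Longrightarrow> finite B"
    and "\<And>B. B \<in> set (snd st) \<Longrightarrow> B \<subseteq> V"
    and "\<And>v. fst st v \<in> set (snd st) \<or> fst st v = {v}"
proof -
  note c = assms[unfolded wvalid_def]
  show "\<And>v. v \<in> fst st v" using c by (elim conjE) (erule spec)
  show "\<And>u v. v \<in> fst st u \<Longrightarrow> fst st v = fst st u" using c by (elim conjE) simp
  show "\<And>B. B \<in> set (snd st) \<Longrightarrow> \<exists>v. B = fst st v" using c by (elim conjE) simp
  show "distinct (snd st)" using c by (elim conjE)
  show "snd st \<noteq> []" using c by (elim conjE)
  show "\<And>B. B \<in> set (snd st) \<Longrightarrow> finite B" using c by (elim conjE) simp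
  show "\<And>B. B \<in> set (snd st) \<Longrightarrow> B \<subseteq> V" using c by (elim conjE) simp
  show "\<And>v. fst st v \<in> set (snd st) \<or> fst st v = {v}" using c by (elim conjE) (erule spec)
qed

lemma init_valid: "x \<in> V \<Longrightarrow> wvalid (init_state x)"
  unfolding wvalid_def init_state_def by auto

lemma reach_out:
  assumes "(a, b) \<in> {(tlv e, hdv e) | e. e \<in> E}\<^sup>*" "a \<in> L" "b \<notin> L"
  shows "\<exists>e\<in>E. tlv e \<in> L \<and> hdv e \<notin> L"
  using assms
proof (induction rule: rtrancl_induct)
  case base then show ?case by simp
next
  case (step y z)
  show ?case
  proof (cases "y \<in> L")
    case True
    with step show ?thesis by auto
  next
    case False
    then show ?thesis using step by blast
  qed
qed

lemma out_fin_ne: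
  assumes v: "wvalid st" and ns: "\<not> stopped bd st"
  shows "finite (cur_out E tlv hdv st) \<and> cur_out E tlv hdv st \<noteq> {} \<and> cur_out E tlv hdv st \<subseteq> E"
proof -
  define L where "L = last (snd st)"
  have Lin: "L \<in> set (snd st)" using wvD(5)[OF v] unfolding L_def by simp
  have Lfin: "finite L" "L \<subseteq> V" using wvD(6,7)[OF v Lin] by auto
  obtain u where u: "L = fst st u" using wvD(3)[OF v Lin] by blast
  have uL: "u \<in> L" using wvD(1)[OF v, of u] u by simp
  have "cur_out E tlv hdv st \<subseteq> (\<Union>v\<in>L. {e\<in>E. tlv e = v})"
    unfolding cur_out_def out_edges_def L_def by auto
  moreover have "finite (\<Union>v\<in>L. {e\<in>E. tlv e = v})"
    by (intro finite_UN_I Lfin(1)) (use Lfin(2) lf in \<open>auto simp: locally_finite_def\<close>)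
  ultimately have fin: "finite (cur_out E tlv hdv st)" by (rule finite_subset)
  obtain z where z: "z \<in> V" "z \<notin> L"
  proof -
    show ?thesis
    proof (cases bd)
      case None
      then have "infinite V" using bdc by auto
      have "V - L \<noteq> {}"
      proof
        assume "V - L = {}"
        then have "V \<subseteq> L" by blast
        then show False using Lfin \<open>infinite V\<close> finite_subset by blast
      qed
      then show ?thesis using that by blast
    next
      case (Some d)
      then have "d \<in> V" using bdc by auto
      moreover have "d \<notin> L" using ns Some unfolding stopped_def L_def by simp
      ultimately show ?thesis using that by blast
    qed
  qed
  have "(u, z) \<in> {(tlv e, hdv e) | e. e \<in> E}\<^sup>*"
  proof -
    have "u \<in> V" using uL Lfin by blast
    then show ?thesis using cg z(1) unfolding connected_graph_def by blast
  qed
  then obtain e where "e \<in> E" "tlv e \<in> L" "hdv e \<notin> L" using reach_out[OF _ uL z(2)] by blast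
  then have "e \<in> cur_out E tlv hdv st" unfolding cur_out_def out_edges_def L_def by simp
  then show ?thesis using fin unfolding cur_out_def out_edges_def by blast
qed

lemma contr_facts:
  assumes v: "wvalid st" and H: "H \<in> set (snd st)"
  shows "snd st = takeWhile (\<lambda>B. B \<noteq> H) (snd st) @ dropWhile (\<lambda>B. B \<noteq> H) (snd st)"
    and "dropWhile (\<lambda>B. B \<noteq> H) (snd st) \<noteq> []"
    and "hd (dropWhile (\<lambda>B. B \<noteq> H) (snd st)) = H"
    and "H \<notin> set (takeWhile (\<lambda>B. B \<noteq> H) (snd st))"
    and "set (takeWhile (\<lambda>B. B \<noteq> H) (snd st)) \<inter> set (dropWhile (\<lambda>B. B \<noteq> H) (snd st)) = {}"
    and "last (snd st) \<in> set (dropWhile (\<lambda>B. B \<noteq> H) (snd st))"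
    and "\<And>u. u \<in> \<Union> (set (dropWhile (\<lambda>B. B \<noteq> H) (snd st))) \<longleftrightarrow> fst st u \<in> set (dropWhile (\<lambda>B. B \<noteq> H) (snd st))"
proof -
  let ?pre = "takeWhile (\<lambda>B. B \<noteq> H) (snd st)" and ?post = "dropWhile (\<lambda>B. B \<noteq> H) (snd st)"
  show 1: "snd st = ?pre @ ?post" by simp
  show 2: "?post \<noteq> []" using H by (simp add: dropWhile_eq_Nil_conv)
  show "hd ?post = H" using hd_dropWhile[OF 2] by simp
  show "H \<notin> set ?pre" by (auto dest: set_takeWhileD)
  show "set ?pre \<inter> set ?post = {}" using wvD(4)[OF v] 1 by (metis distinct_append)
  show "last (snd st) \<in> set ?post" using 2 1 by (metis last_appendR last_in_set)
  fix u
  show "u \<in> \<Union> (set ?post) \<longleftrightarrow> fst st u \<in> set ?post"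
  proof
    assume "u \<in> \<Union> (set ?post)"
    then obtain B where B: "B \<in> set ?post" "u \<in> B" by blast
    then have "B \<in> set (snd st)" by (meson set_dropWhileD)
    then obtain w where "B = fst st w" using wvD(3)[OF v] by blast
    then have "fst st u = B" using wvD(2)[OF v] B(2) by simp
    then show "fst st u \<in> set ?post" using B by simp
  next
    assume "fst st u \<in> set ?post"
    then show "u \<in> \<Union> (set ?post)" using wvD(1)[OF v, of u] by blast
  qed
qed

lemma part_last:
  assumes v: "wvalid st" and t: "t \<in> last (snd st)"
  shows "fst st t = last (snd st)"
proof -
  have "last (snd st) \<in> set (snd st)" using wvD(5)[OF v] by simp
  then obtain w where "last (snd st) = fst st w" using wvD(3)[OF v] by blast
  then show ?thesis using wvD(2)[OF v] t by simp
qed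

lemma valid_step:
  assumes v: "wvalid st" and e: "e \<in> cur_out E tlv hdv st"
  shows "wvalid (walk_step hdv st e) \<and> wdead (walk_step hdv st e) e"
proof -
  define part where "part = fst st"
  define path where "path = snd st"
  define H where "H = part (hdv e)"
  have eE: "e \<in> E" and tL: "tlv e \<in> last path" and hL: "hdv e \<notin> last path"
    using e unfolding cur_out_def out_edges_def path_def by auto
  have ptl: "part (tlv e) = last path" using part_last[OF v] tL unfolding part_def path_def by simp
  show ?thesis
  proof (cases "H \<in> set path")
    case False
    have ws: "walk_step hdv st e = (part, path @ [H])"
      using False unfolding walk_step_def part_def path_def H_def by (simp add: Let_def)
    have Hs: "H = {hdv e}" using wvD(8)[OF v, of "hdv e"] False unfolding H_def part_def path_def by auto
    have hV: "hdv e \<in> V" using mg eE unfolding multigraph_def by auto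
    have "wvalid (part, path @ [H])"
      unfolding wvalid_def fst_conv snd_conv
    proof (intro conjI)
      show "\<forall>v. v \<in> part v" using wvD(1)[OF v] unfolding part_def by simp
      show "\<forall>u v. v \<in> part u \<longrightarrow> part v = part u" using wvD(2)[OF v] unfolding part_def by simp
      show "\<forall>B\<in>set (path @ [H]). \<exists>v. B = part v" using wvD(3)[OF v] unfolding part_def path_def H_def by auto
      show "distinct (path @ [H])" using wvD(4)[OF v] False unfolding path_def by simp
      show "path @ [H] \<noteq> []" by simp
      show "\<forall>B\<in>set (path @ [H]). finite B \<and> B \<subseteq> V" using wvD(6,7)[OF v] Hs hV unfolding path_def by auto
      show "\<forall>v. part v \<in> set (path @ [H]) \<or> part v = {v}" using wvD(8)[OF v] unfolding part_def path_def by auto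
    qed
    moreover have "wdead (part, path @ [H]) e"
    proof -
      have ne: "path \<noteq> []" using wvD(5)[OF v] unfolding path_def .
      have "Suc (length path - 1) < length (path @ [H])" using ne by simp
      moreover have "(path @ [H]) ! (length path - 1) = part (tlv e)"
        using ne ptl by (simp add: nth_append last_conv_nth)
      moreover have "(path @ [H]) ! Suc (length path - 1) = part (hdv e)"
        using ne unfolding H_def by (simp add: nth_append)
      ultimately show ?thesis unfolding wdead_def by auto
    qed
    ultimately show ?thesis using ws by simp
  next
    case True
    define pre where "pre = takeWhile (\<lambda>B. B \<noteq> H) path"
    define post where "post = dropWhile (\<lambda>B. B \<noteq> H) path"
    define C where "C = \<Union> (set post)"
    define part' where "part' = (\<lambda>v. if v \<in> C then C else part v)"
    have ws: "walk_step hdv st e = (part', pre @ [C])"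
      using True unfolding walk_step_def part_def path_def H_def pre_def post_def C_def part'_def by (simp add: Let_def)
    note cf = contr_facts[OF v True[unfolded path_def], folded path_def, folded pre_def post_def]
    have memC: "u \<in> C \<longleftrightarrow> part u \<in> set post" for u using cf(7) unfolding C_def part_def by simp
    have p'eq: "part' u = (if part u \<in> set post then C else part u)" for u
      unfolding part'_def using memC by simp
    have Hpost: "H \<in> set post" using hd_in_set[OF cf(2)] cf(3) by simp
    have setp: "set path = set pre \<union> set post" by (subst cf(1)) simp
    have fbv: "\<forall>B\<in>set (pre @ [C]). finite B \<and> B \<subseteq> V"
    proof -
      have fpost: "\<forall>B\<in>set post. finite B \<and> B \<subseteq> V"
        using wvD(6,7)[OF v] setp unfolding path_def by blast
      have fpre: "\<forall>B\<in>set pre. finite B \<and> B \<subseteq> V"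
        using wvD(6,7)[OF v] setp unfolding path_def by blast
      have "finite C \<and> C \<subseteq> V" using fpost unfolding C_def by auto
      then show ?thesis using fpre by auto
    qed
    have "wvalid (part', pre @ [C])"
      unfolding wvalid_def fst_conv snd_conv
    proof (intro conjI allI impI ballI)
      fix u show "u \<in> part' u"
        using wvD(1)[OF v, of u] memC[of u] unfolding part'_def part_def by (cases "u \<in> C") simp_all
    next
      fix u w assume "w \<in> part' u"
      then show "part' w = part' u"
      proof (cases "part u \<in> set post")
        case True
        then have "w \<in> C" using \<open>w \<in> part' u\<close> p'eq[of u] by simp
        then show ?thesis using memC[of w] p'eq[of w] p'eq[of u] True by simp
      next
        case False
        then have "w \<in> part u" using \<open>w \<in> part' u\<close> p'eq[of u] by simp
        then have "part w = part u" using wvD(2)[OF v] unfolding part_def by blast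
        then show ?thesis using p'eq[of w] p'eq[of u] by simp
      qed
    next
      fix B assume "B \<in> set (pre @ [C])"
      then consider "B \<in> set pre" | "B = C" by auto
      then show "\<exists>w. B = part' w"
      proof cases
        case 1
        then have "B \<in> set path" using setp by blast
        then obtain w where w: "B = part w" using wvD(3)[OF v] unfolding part_def path_def by blast
        have "part w \<notin> set post" using cf(5) 1 w by auto
        then show ?thesis using w p'eq[of w] by auto
      next
        case 2
        have "part (hdv e) \<in> set post" using Hpost unfolding H_def .
        then show ?thesis using 2 p'eq[of "hdv e"] by auto
      qed
    next
      show "distinct (pre @ [C])"
      proof -
        have "distinct (pre @ post)" using wvD(4)[OF v] cf(1) unfolding path_def by simp
        then have dp: "distinct pre" by simp
        have "C \<notin> set pre"
        proof
          assume Cp: "C \<in> set pre"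
          then have "C \<in> set path" using setp by blast
          then obtain w where w: "C = part w" using wvD(3)[OF v] unfolding part_def path_def by blast
          have "hdv e \<in> H" using wvD(1)[OF v] unfolding H_def part_def by simp
          then have "hdv e \<in> C" using Hpost unfolding C_def by blast
          then have "part (hdv e) = C" using wvD(2)[OF v] w unfolding part_def by simp
          then show False using cf(4) Cp unfolding H_def by simp
        qed
        then show ?thesis using dp by simp
      qed
    next
      show "pre @ [C] \<noteq> []" by simp
    next
      fix B assume B: "B \<in> set (pre @ [C])"
      show "finite B" using fbv B by blast
    next
      fix B assume B: "B \<in> set (pre @ [C])"
      show "B \<subseteq> V" using fbv B by blast
    next
      fix u
      show "part' u \<in> set (pre @ [C]) \<or> part' u = {u}"
      proof (cases "part u \<in> set post")
        case True then show ?thesis using p'eq by simp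
      next
        case False
        then have "part u \<in> set pre \<or> part u = {u}"
          using wvD(8)[OF v, of u] setp unfolding part_def path_def by blast
        then show ?thesis using p'eq False by simp
      qed
    qed
    moreover have "wdead (part', pre @ [C]) e"
    proof -
      have "last path \<in> set post" using cf(6) .
      then have "part' (tlv e) = C" using p'eq ptl by simp
      moreover have "part' (hdv e) = C" using p'eq Hpost unfolding H_def by simp
      ultimately show ?thesis unfolding wdead_def by simp
    qed
    ultimately show ?thesis using ws by simp
  qed
qed

lemma contr_step:
  assumes v: "wvalid st" and H: "fst st (hdv e) \<in> set (snd st)"
  obtains pre post C where
    "walk_step hdv st e = ((\<lambda>u. if fst st u \<in> set post then C else fst st u), pre @ [C])"
    "snd st = pre @ post" "post \<noteq> []" "hd post = fst st (hdv e)" "set pre \<inter> set post = {}"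
    "last (snd st) \<in> set post"
proof -
  let ?H = "fst st (hdv e)"
  let ?pre = "takeWhile (\<lambda>B. B \<noteq> ?H) (snd st)" and ?post = "dropWhile (\<lambda>B. B \<noteq> ?H) (snd st)"
  let ?C = "\<Union> (set ?post)"
  note cf = contr_facts[OF v H]
  have "walk_step hdv st e = ((\<lambda>u. if u \<in> ?C then ?C else fst st u), ?pre @ [?C])"
    using H unfolding walk_step_def by (simp add: Let_def)
  also have "(\<lambda>u. if u \<in> ?C then ?C else fst st u) = (\<lambda>u. if fst st u \<in> set ?post then ?C else fst st u)"
    using cf(7) by (intro ext) simp
  finally show ?thesis using that cf by blast
qed

lemma dead_step:
  assumes v: "wvalid st" and d: "wdead st d" and e: "e \<in> cur_out E tlv hdv st"
  shows "wdead (walk_step hdv st e) d"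
proof (cases "fst st (hdv e) \<in> set (snd st)")
  case False
  have ws: "walk_step hdv st e = (fst st, snd st @ [fst st (hdv e)])"
    using False unfolding walk_step_def by (simp add: Let_def)
  show ?thesis using d unfolding ws wdead_def by (auto simp: nth_append)
next
  case True
  obtain pre post C where ws: "walk_step hdv st e = ((\<lambda>u. if fst st u \<in> set post then C else fst st u), pre @ [C])"
    and sp: "snd st = pre @ post" and pne: "post \<noteq> []" and hp: "hd post = fst st (hdv e)"
    and dj: "set pre \<inter> set post = {}"
    by (rule contr_step[OF v True])
  define part' where "part' = (\<lambda>u. if fst st u \<in> set post then C else fst st u)"
  have ws': "walk_step hdv st e = (part', pre @ [C])" using ws unfolding part'_def by simp
  show ?thesis
  proof (cases "fst st (tlv d) = fst st (hdv d)")
    case True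
    then show ?thesis unfolding ws' wdead_def part'_def by simp
  next
    case False
    then obtain i where i: "Suc i < length (snd st)" "snd st ! i = fst st (tlv d)" "snd st ! Suc i = fst st (hdv d)"
      using d unfolding wdead_def by blast
    let ?m = "length pre"
    consider "Suc i < ?m" | "Suc i = ?m" | "?m \<le> i" by linarith
    then show ?thesis
    proof cases
      case 1
      have a: "pre ! i = fst st (tlv d)" "pre ! Suc i = fst st (hdv d)"
        using i 1 sp by (simp_all add: nth_append)
      have "pre ! i \<in> set pre" "pre ! Suc i \<in> set pre" using 1 by simp_all
      then have b: "fst st (tlv d) \<notin> set post" "fst st (hdv d) \<notin> set post" using a dj by auto
      have "(pre @ [C]) ! i = part' (tlv d)" "(pre @ [C]) ! Suc i = part' (hdv d)"
        using 1 a b unfolding part'_def by (simp_all add: nth_append)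
      moreover have "Suc i < length (pre @ [C])" using 1 by simp
      ultimately show ?thesis unfolding ws' wdead_def by auto
    next
      case 2
      have a: "pre ! i = fst st (tlv d)" using i 2 sp by (simp add: nth_append)
      have "pre ! i \<in> set pre" using 2 by simp
      then have b: "fst st (tlv d) \<notin> set post" using a dj by auto
      have "snd st ! Suc i = post ! 0" using sp 2 by (simp add: nth_append)
      then have "fst st (hdv d) = hd post" using i(3) pne by (simp add: hd_conv_nth)
      then have c: "fst st (hdv d) \<in> set post" using pne by simp
      have "(pre @ [C]) ! i = part' (tlv d)" "(pre @ [C]) ! Suc i = part' (hdv d)"
        using 2 a b c unfolding part'_def by (simp_all add: nth_append)
      moreover have "Suc i < length (pre @ [C])" using 2 by simp
      ultimately show ?thesis unfolding ws' wdead_def by auto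
    next
      case 3
      have "snd st ! i = post ! (i - ?m)" using sp 3 by (simp add: nth_append)
      moreover have "i - ?m < length post" using i(1) sp 3 by simp
      ultimately have a: "fst st (tlv d) \<in> set post" using i(2) nth_mem[of "i - ?m" post] by simp
      have "snd st ! Suc i = post ! (Suc i - ?m)" using sp 3 by (simp add: nth_append)
      moreover have "Suc i - ?m < length post" using i(1) sp 3 by simp
      ultimately have b: "fst st (hdv d) \<in> set post" using i(3) nth_mem[of "Suc i - ?m" post] by simp
      show ?thesis using a b unfolding ws' wdead_def part'_def by simp
    qed
  qed
qed

lemma dead_notout:
  assumes v: "wvalid st" and d: "wdead st d"
  shows "d \<notin> cur_out E tlv hdv st"
proof
  assume "d \<in> cur_out E tlv hdv st"
  then have t: "tlv d \<in> last (snd st)" and h: "hdv d \<notin> last (snd st)"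
    unfolding cur_out_def out_edges_def by auto
  have pt: "fst st (tlv d) = last (snd st)" by (rule part_last[OF v t])
  show False
  proof (cases "fst st (tlv d) = fst st (hdv d)")
    case True
    then show False using wvD(1)[OF v, of "hdv d"] pt h by simp
  next
    case False
    then obtain i where i: "Suc i < length (snd st)" "snd st ! i = fst st (tlv d)"
      using d unfolding wdead_def by blast
    have ne: "snd st \<noteq> []" using wvD(5)[OF v] .
    have "snd st ! i = snd st ! (length (snd st) - 1)" using i pt ne by (simp add: last_conv_nth)
    moreover have "i < length (snd st)" "length (snd st) - 1 < length (snd st)" using i ne by auto
    ultimately have "i = length (snd st) - 1" using wvD(4)[OF v] by (simp add: nth_eq_iff_index_eq)
    then show False using i(1) by simp
  qed
qed

end



context GG begin

definition wstep :: "'v wstate \<times> ('e \<Rightarrow> real) \<Rightarrow> 'v wstate \<times> ('e \<Rightarrow> real)" where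
  "wstep p = (if stopped bd (fst p) then p else
     (let Out = cur_out E tlv hdv (fst p); e = cleb_choice Out (snd p) in
       (walk_step hdv (fst p) e, (\<lambda>f. if f \<in> Out then snd p f - snd p e else snd p f))))"

definition wsel :: "'v wstate \<times> ('e \<Rightarrow> real) \<Rightarrow> 'e option" where
  "wsel p = (if stopped bd (fst p) then None else Some (cleb_choice (cur_out E tlv hdv (fst p)) (snd p)))"

definition wseq :: "nat \<Rightarrow> 'v wstate \<times> ('e \<Rightarrow> real) \<Rightarrow> 'e option list" where
  "wseq k p = map (\<lambda>i. wsel ((wstep ^^ i) p)) [0..<k]"

lemma cleb_state_eq: "cleb_state E tlv hdv bd x w n = (wstep ^^ n) (init_state x, w)"
proof (induction n)
  case 0 then show ?case by simp
next
  case (Suc n)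
  have "cleb_state E tlv hdv bd x w (Suc n) = wstep (cleb_state E tlv hdv bd x w n)"
    unfolding cleb_state.simps wstep_def Let_def by simp
  then show ?case using Suc.IH by simp
qed

lemma cleb_sel_eq: "cleb_sel E tlv hdv bd x w n = wsel ((wstep ^^ n) (init_state x, w))"
  by (simp add: cleb_sel_def wsel_def cleb_state_eq Let_def)

lemma wseq_Suc: "wseq (Suc k) p = wsel p # wseq k (wstep p)"
proof -
  have "[0..<Suc k] = 0 # map Suc [0..<k]" by (simp add: upt_conv_Cons map_Suc_upt)
  then show ?thesis unfolding wseq_def by (simp add: funpow_Suc_right del: funpow.simps upt_Suc)
qed

lemma wseq_0: "wseq 0 p = []" by (simp add: wseq_def)

lemma wseq_stopped: "stopped bd (fst p) \<Longrightarrow> wseq k p = replicate k None"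
proof (induction k)
  case 0 then show ?case by (simp add: wseq_0)
next
  case (Suc k)
  have "wstep p = p" using Suc.prems by (simp add: wstep_def)
  then show ?case using Suc by (simp add: wseq_Suc wsel_def)
qed

lemma wstep_valid:
  assumes v: "wvalid (fst p)"
  shows "wvalid (fst (wstep p)) \<and> (\<forall>d. wdead (fst p) d \<longrightarrow> wdead (fst (wstep p)) d)"
proof (cases "stopped bd (fst p)")
  case True then show ?thesis using v by (simp add: wstep_def)
next
  case False
  define Out where "Out = cur_out E tlv hdv (fst p)"
  define e where "e = cleb_choice Out (snd p)"
  have o: "finite Out" "Out \<noteq> {}" using out_fin_ne[OF v False] unfolding Out_def by auto
  have eO: "e \<in> Out" using choice_props[OF o] unfolding e_def by blast
  have ws: "fst (wstep p) = walk_step hdv (fst p) e"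
    using False unfolding wstep_def Out_def e_def by (simp add: Let_def)
  show ?thesis
    using valid_step[OF v eO[unfolded Out_def]] dead_step[OF v _ eO[unfolded Out_def]] ws by simp
qed

lemma wstep_indep:
  assumes v: "wvalid (fst p)" and d: "wdead (fst p) d" and q: "fst q = fst p"
    and ag: "\<forall>f. f \<noteq> d \<longrightarrow> snd q f = snd p f"
  shows "fst (wstep q) = fst (wstep p) \<and> (\<forall>f. f \<noteq> d \<longrightarrow> snd (wstep q) f = snd (wstep p) f)"
proof (cases "stopped bd (fst p)")
  case True then show ?thesis using q ag by (simp add: wstep_def)
next
  case False
  define Out where "Out = cur_out E tlv hdv (fst p)"
  have o: "finite Out" "Out \<noteq> {}" using out_fin_ne[OF v False] unfolding Out_def by auto
  have dO: "d \<notin> Out" using dead_notout[OF v d] unfolding Out_def .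
  have ch: "cleb_choice Out (snd q) = cleb_choice Out (snd p)"
    by (rule choice_cong) (use ag dO in auto)
  define e where "e = cleb_choice Out (snd p)"
  have eO: "e \<in> Out" using choice_props[OF o] unfolding e_def by blast
  have ed: "e \<noteq> d" using eO dO by auto
  have wp: "wstep p = (walk_step hdv (fst p) e, (\<lambda>f. if f \<in> Out then snd p f - snd p e else snd p f))"
    using False unfolding wstep_def Out_def e_def by (simp add: Let_def)
  have wq0: "wstep q = (walk_step hdv (fst p) (cleb_choice Out (snd q)), (\<lambda>f. if f \<in> Out then snd q f - snd q (cleb_choice Out (snd q)) else snd q f))"
    using False q unfolding wstep_def Out_def by (simp add: Let_def)
  have wq: "wstep q = (walk_step hdv (fst p) e, (\<lambda>f. if f \<in> Out then snd q f - snd q e else snd q f))"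
    unfolding wq0 ch e_def ..
  show ?thesis unfolding wp wq using ag ed by simp
qed

lemma iter_indep:
  assumes v: "wvalid (fst p)" and d: "wdead (fst p) d" and q: "fst q = fst p"
    and ag: "\<forall>f. f \<noteq> d \<longrightarrow> snd q f = snd p f"
  shows "wvalid (fst ((wstep ^^ i) p)) \<and> wdead (fst ((wstep ^^ i) p)) d \<and>
    fst ((wstep ^^ i) q) = fst ((wstep ^^ i) p) \<and> (\<forall>f. f \<noteq> d \<longrightarrow> snd ((wstep ^^ i) q) f = snd ((wstep ^^ i) p) f)"
proof (induction i)
  case 0 then show ?case using v d q ag by simp
next
  case (Suc i)
  then have A: "wvalid (fst ((wstep ^^ i) p))" "wdead (fst ((wstep ^^ i) p)) d"
    "fst ((wstep ^^ i) q) = fst ((wstep ^^ i) p)" "\<forall>f. f \<noteq> d \<longrightarrow> snd ((wstep ^^ i) q) f = snd ((wstep ^^ i) p) f"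
    by blast+
  show ?case using wstep_valid[OF A(1)] A(2) wstep_indep[OF A] by simp
qed

lemma wsel_indep:
  assumes v: "wvalid (fst p)" and d: "wdead (fst p) d" and q: "fst q = fst p"
    and ag: "\<forall>f. f \<noteq> d \<longrightarrow> snd q f = snd p f"
  shows "wsel q = wsel p"
proof (cases "stopped bd (fst p)")
  case True then show ?thesis using q by (simp add: wsel_def)
next
  case False
  have dO: "d \<notin> cur_out E tlv hdv (fst p)" using dead_notout[OF v d] .
  have "cleb_choice (cur_out E tlv hdv (fst p)) (snd q) = cleb_choice (cur_out E tlv hdv (fst p)) (snd p)"
    by (rule choice_cong) (use ag dO in auto)
  then show ?thesis using q False by (simp add: wsel_def)
qed

lemma wseq_indep:
  assumes v: "wvalid (fst p)" and d: "wdead (fst p) d" and q: "fst q = fst p"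
    and ag: "\<forall>f. f \<noteq> d \<longrightarrow> snd q f = snd p f"
  shows "wseq k q = wseq k p"
  unfolding wseq_def
proof (rule map_cong[OF refl])
  fix i
  note I = iter_indep[OF v d q ag, of i]
  show "wsel ((wstep ^^ i) q) = wsel ((wstep ^^ i) p)"
    using I by (intro wsel_indep) blast+
qed

end

lemma lcrw_nonneg: "0 \<le> lcrw_prob E tlv hdv bd st ss"
  by (induction ss arbitrary: st) (auto split: option.splits)

lemma lcrw_stopped: "stopped bd st \<Longrightarrow> lcrw_prob E tlv hdv bd st ss = (if ss = replicate (length ss) None then 1 else 0)"
  by (induction ss) auto




context GG begin

lemma main_ind:
  assumes "wvalid st"
  shows "{w \<in> space (PiM E (\<lambda>_. Ex)). wseq (length ss) (st, w) = ss} \<in> sets (PiM E (\<lambda>_. Ex)) \<and>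
         emeasure (PiM E (\<lambda>_. Ex)) {w \<in> space (PiM E (\<lambda>_. Ex)). wseq (length ss) (st, w) = ss}
           = ennreal (lcrw_prob E tlv hdv bd st ss)"
  using assms
proof (induction ss arbitrary: st)
  case Nil
  interpret P: prob_space "PiM E (\<lambda>_. Ex)" by (rule prob_PE)
  show ?case by (simp add: wseq_0 P.emeasure_space_1)
next
  case (Cons s ss)
  define M where "M = PiM E (\<lambda>_. Ex)"
  interpret P: prob_space M unfolding M_def by (rule prob_PE)
  let ?k = "length ss"
  have v: "wvalid st" by fact
  show ?case
  proof (cases "stopped bd st")
    case True
    define sN where "sN = (s # ss = replicate (length (s # ss)) None)"
    have st: "{w \<in> space M. wseq (length (s # ss)) (st, w) = s # ss} = (if sN then space M else {})"
      using wseq_stopped[of "(st, _)"] True unfolding sN_def by auto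
    have lc: "lcrw_prob E tlv hdv bd st (s # ss) = (if sN then 1 else 0)"
      using lcrw_stopped[OF True, of E tlv hdv "s # ss"] unfolding sN_def by simp
    show ?thesis unfolding M_def[symmetric] st lc by (cases sN) (simp_all add: P.emeasure_space_1)
  next
    case False
    define Out where "Out = cur_out E tlv hdv st"
    have o: "finite Out" "Out \<noteq> {}" "Out \<subseteq> E" using out_fin_ne[OF v False] unfolding Out_def by auto
    have sel: "wsel (st, w) = Some (cleb_choice Out w)" for w
      using False unfolding wsel_def Out_def by simp
    have cO: "cleb_choice Out w \<in> Out" for w using choice_props[OF o(1,2)] by blast
    show ?thesis
    proof (cases "s = None \<or> (\<exists>e. s = Some e \<and> e \<notin> Out)")
      case True
      have E0: "{w \<in> space M. wseq (length (s # ss)) (st, w) = s # ss} = {}"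
        using True cO by (auto simp: wseq_Suc sel)
      have L0: "lcrw_prob E tlv hdv bd st (s # ss) = 0"
        using True False unfolding Out_def by auto
      show ?thesis unfolding M_def[symmetric] E0 L0 by simp
    next
      case F2: False
      then obtain e where s: "s = Some e" and eO: "e \<in> Out" by (cases s) auto
      define st' where "st' = walk_step hdv st e"
      have vs: "wvalid st'" "wdead st' e" using valid_step[OF v eO[unfolded Out_def]] unfolding st'_def by auto
      define A where "A = {w \<in> space M. wseq ?k (st', w) = ss}"
      have IH: "A \<in> sets M" "emeasure M A = ennreal (lcrw_prob E tlv hdv bd st' ss)"
        using Cons.IH[OF vs(1)] unfolding A_def M_def by auto
      have eq: "{w \<in> space M. wseq (length (s # ss)) (st, w) = s # ss} =
        {w \<in> space M. cleb_choice Out w = e} \<inter> Tm Out e -` A"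
      proof (rule set_eqI)
        fix w
        show "w \<in> {w \<in> space M. wseq (length (s # ss)) (st, w) = s # ss} \<longleftrightarrow>
              w \<in> {w \<in> space M. cleb_choice Out w = e} \<inter> Tm Out e -` A"
        proof (cases "w \<in> space M \<and> cleb_choice Out w = e")
          case True
          then have wM: "w \<in> space M" and ch: "cleb_choice Out w = e" by auto
          have ws0: "wstep (st, w) = (walk_step hdv st (cleb_choice Out w), (\<lambda>f. if f \<in> Out then w f - w (cleb_choice Out w) else w f))"
            using \<open>\<not> stopped bd st\<close> unfolding wstep_def Out_def fst_conv snd_conv Let_def by simp
          have ws: "wstep (st, w) = (st', (\<lambda>f. if f \<in> Out then w f - w e else w f))"
            unfolding ws0 ch st'_def ..
          have "wseq ?k (st', (\<lambda>f. if f \<in> Out then w f - w e else w f)) = wseq ?k (st', Tm Out e w)"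
            by (rule wseq_indep[where p="(st', Tm Out e w)" and q="(st', (\<lambda>f. if f \<in> Out then w f - w e else w f))" and d=e])
               (use vs in \<open>auto simp: Tm_def\<close>)
          moreover have "Tm Out e w \<in> space M" using Tm_space[OF o(3) eO] wM unfolding M_def by simp
          ultimately show ?thesis using wM ch
            by (simp add: wseq_Suc sel ws s A_def)
        next
          case False
          then show ?thesis by (auto simp: wseq_Suc sel s)
        qed
      qed
      have "emeasure M ({w \<in> space M. cleb_choice Out w = e} \<inter> Tm Out e -` A) = emeasure M A / of_nat (card Out)"
        using choice_prob[OF o(1,3) eO, of A] IH(1) unfolding M_def by simp
      also have "\<dots> = ennreal (lcrw_prob E tlv hdv bd st' ss / real (card Out))"
      proof -
        have "0 < real (card Out)" using o by (simp add: card_gt_0_iff)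
        moreover have "0 \<le> lcrw_prob E tlv hdv bd st' ss" by (rule lcrw_nonneg)
        ultimately show ?thesis using IH(2)
          by (simp add: ennreal_of_nat_eq_real_of_nat divide_ennreal)
      qed
      also have "lcrw_prob E tlv hdv bd st' ss / real (card Out) = lcrw_prob E tlv hdv bd st (s # ss)"
        using False eO unfolding s st'_def Out_def by simp
      finally have em: "emeasure M {w \<in> space M. wseq (length (s # ss)) (st, w) = s # ss} = ennreal (lcrw_prob E tlv hdv bd st (s # ss))"
        unfolding eq .
      have "{w \<in> space M. cleb_choice Out w = e} \<inter> Tm Out e -` A =
            {w \<in> space M. cleb_choice Out w = e} \<inter> (Tm Out e -` A \<inter> space M)" by auto
      moreover have "{w \<in> space M. cleb_choice Out w = e} \<in> sets M"
        unfolding M_def by (rule choice_meas[OF o(1,3)])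
      moreover have "Tm Out e -` A \<inter> space M \<in> sets M"
        using measurable_sets[OF Tm_meas[OF o(3) eO] IH(1)[unfolded M_def]] unfolding M_def .
      ultimately have "{w \<in> space M. wseq (length (s # ss)) (st, w) = s # ss} \<in> sets M"
        unfolding eq by auto
      then show ?thesis using em unfolding M_def by simp
    qed
  qed
qed

end

theorem mainTheorem12:
  fixes V :: "'v set" and E :: "'e set" and tlv hdv :: "'e \<Rightarrow> 'v" and rv :: "'e \<Rightarrow> 'e"
    and bd :: "'v option" and x :: 'v
  assumes "multigraph V E tlv hdv rv"
    and "locally_finite V E tlv"
    and "connected_graph V E tlv hdv"
    and "(finite V \<and> (\<exists>d\<in>V. bd = Some d)) \<or> (infinite V \<and> bd = None)"
    and "x \<in> V"
  shows "\<forall>ss :: 'e option list.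
           measure (exp_weights E)
             {w \<in> space (exp_weights E). map (cleb_sel E tlv hdv bd x w) [0..<length ss] = ss}
           = lcrw_prob E tlv hdv bd (init_state x) ss"
proof
  fix ss :: "'e option list"
  interpret GG V E tlv hdv rv bd using assms(1-4) by unfold_locales
  have "{w \<in> space (exp_weights E). map (cleb_sel E tlv hdv bd x w) [0..<length ss] = ss} =
        {w \<in> space (PiM E (\<lambda>_. Ex)). wseq (length ss) (init_state x, w) = ss}"
  proof -
    have "\<And>w. cleb_sel E tlv hdv bd x w = (\<lambda>i. wsel ((wstep ^^ i) (init_state x, w)))"
      by (rule ext) (rule cleb_sel_eq)
    then show ?thesis unfolding exp_weights_def wseq_def by simp
  qed
  moreover have "emeasure (PiM E (\<lambda>_. Ex)) {w \<in> space (PiM E (\<lambda>_. Ex)). wseq (length ss) (init_state x, w) = ss}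
     = ennreal (lcrw_prob E tlv hdv bd (init_state x) ss)"
    using main_ind[OF init_valid[OF assms(5)]] by blast
  ultimately show "measure (exp_weights E)
             {w \<in> space (exp_weights E). map (cleb_sel E tlv hdv bd x w) [0..<length ss] = ss}
           = lcrw_prob E tlv hdv bd (init_state x) ss"
    unfolding measure_def exp_weights_def using lcrw_nonneg[of E tlv hdv bd "init_state x" ss] by simp
qed



end
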